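(* Let $\langle \mathscr{A} \mid \mathscr{R} \rangle$ be a $C(4)$ presentation. Suppose $w = XYZw'$, where $XYZ$ is a relation word with $X$, $Y$, $Z$ respectively its maximal piece prefix, middle word and maximal piece suffix, and $XY$ is a clean overlap prefix of $w$. Let $p$ be a piece. Then $\rho(pw') < \rho(w)$.
   Context: A monoid presentation $\langle \mathscr{A} \mid \mathscr{R} \rangle$ consists of an alphabet $\mathscr{A}$ and a set $\mathscr{R} \subseteq \mathscr{A}^* \times \mathscr{A}^*$ of relations. A relation word is a word occurring as one side of a relation. A piece is a word which occurs as a factor of two distinct relation words, or in two different (possibly overlapping) positions within one relation word; the empty word is always a piece. The presentation is $C(n)$ if no relation word can be written as a product of strictly fewer than $n$ pieces. For a relation word $R$ in a $C(3)$ (or stronger) presentation write $R = X_R Y_R Z_R$ where $X_R$ is the longest prefix of $R$ which is a piece (maximal piece prefix), $Z_R$ is the longest suffix which is a piece (maximal piece suffix), and $Y_R$ is the remaining middle word. A relation prefix of a word $u$ is a prefix of $u$ of the form $aX_RY_R$ for some word $a$ and relation word $R$. An overlap prefix of $u$ is a relation prefix admitting a factorisation $b X_1 Y_1' X_2 Y_2' \cdots X_n Y_n$ where: $n \geq 1$; this prefix has no factor of the form $X_0Y_0$ ($X_0,Y_0$ the maximal piece prefix and middle word of some relation word) beginning before the end of $b$; for each $i$, $R_i = X_iY_iZ_i$ is a relation word with $X_i$, $Y_i$, $Z_i$ its maximal piece prefix, middle word and maximal piece suffix; and for $1 \leq i < n$, $Y_i'$ is a proper non-empty prefix of $Y_i$.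 A relation prefix $aXY$ of $u$ is clean if $u$ does not have a prefix $aXY'X_1Y_1$ where $X_1, Y_1$ are the maximal piece prefix and middle word of some relation word and $Y'$ is a proper non-empty prefix of $Y$. The function $\rho : \mathscr{A}^* \to \mathbb{Z}$ is defined by $\rho(w) = -1$ if $w$ has no clean overlap prefix, and otherwise $\rho(w)$ is the length of the suffix of $w$ following the clean overlap prefix. *)

theory Defs
  imports Main "HOL-Library.Sublist"
begin

definition relation_words :: "('a list \<times> 'a list) set \<Rightarrow> 'a list set" where
  "relation_words R = {u. \<exists>v. (u, v) \<in> R \<or> (v, u) \<in> R}"

definition occurs_at :: "'a list \<Rightarrow> 'a list \<Rightarrow> nat \<Rightarrow> bool" where
  "occurs_at p r i \<longleftrightarrow> (\<exists>s t. r = s @ p @ t \<and> length s = i)"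

definition piece :: "('a list \<times> 'a list) set \<Rightarrow> 'a list \<Rightarrow> bool" where
  "piece R p \<longleftrightarrow> p = [] \<or>
     (\<exists>r1 i1 r2 i2. r1 \<in> relation_words R \<and> r2 \<in> relation_words R \<and>
        occurs_at p r1 i1 \<and> occurs_at p r2 i2 \<and> (r1, i1) \<noteq> (r2, i2))"

definition small_overlap_C :: "nat \<Rightarrow> ('a list \<times> 'a list) set \<Rightarrow> bool" where
  "small_overlap_C n R \<longleftrightarrow>
     (\<forall>r \<in> relation_words R. \<forall>ps. (\<forall>q \<in> set ps. piece R q) \<and> concat ps = r \<longrightarrow> n \<le> length ps)"

definition max_piece_prefix :: "('a list \<times> 'a list) set \<Rightarrow> 'a list \<Rightarrow> 'a list" where
  "max_piece_prefix R r = take (GREATEST k. k \<le> length r \<and> piece R (take k r)) r"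

definition max_piece_suffix :: "('a list \<times> 'a list) set \<Rightarrow> 'a list \<Rightarrow> 'a list" where
  "max_piece_suffix R r =
     drop (length r - (GREATEST k. k \<le> length r \<and> piece R (drop (length r - k) r))) r"

definition middle_word :: "('a list \<times> 'a list) set \<Rightarrow> 'a list \<Rightarrow> 'a list" where
  "middle_word R r =
     drop (length (max_piece_prefix R r)) (take (length r - length (max_piece_suffix R r)) r)"

definition clean :: "('a list \<times> 'a list) set \<Rightarrow> 'a list \<Rightarrow> 'a list \<Rightarrow> 'a list \<Rightarrow> 'a list \<Rightarrow> bool" where
  "clean R u a X Y \<longleftrightarrow>
     \<not> (\<exists>Y' r1. r1 \<in> relation_words R \<and> Y' \<noteq> [] \<and> strict_prefix Y' Y \<and>
          prefix (a @ X @ Y' @ max_piece_prefix R r1 @ middle_word R r1) u)"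

text \<open>v is an overlap prefix of u, witnessed by the factorisation
  v = b X_1 Y_1' ... X_(n-1) Y_(n-1)' X_n Y_n,
  where rs = [R_1,...,R_n] (n \<ge> 1) and ys = [Y_1',...,Y_(n-1)'];
  a = b X_1 Y_1' ...\<close>
definition overlap_factorisation ::
  "('a list \<times> 'a list) set \<Rightarrow> 'a list \<Rightarrow> 'a list \<Rightarrow> 'a list \<Rightarrow> 'a list list \<Rightarrow> 'a list list \<Rightarrow> bool" where
  "overlap_factorisation R u v b rs ys \<longleftrightarrow>
     prefix v u \<and>
     rs \<noteq> [] \<and> set rs \<subseteq> relation_words R \<and> length ys = length rs - 1 \<and>
     (\<forall>i < length ys. ys ! i \<noteq> [] \<and> strict_prefix (ys ! i) (middle_word R (rs ! i))) \<and>
     v = b @ concat (map (\<lambda>(r, y). max_piece_prefix R r @ y) (zip (butlast rs) ys))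
           @ max_piece_prefix R (last rs) @ middle_word R (last rs) \<and>
     \<not> (\<exists>r0 s t. r0 \<in> relation_words R \<and>
           v = s @ (max_piece_prefix R r0 @ middle_word R r0) @ t \<and> length s < length b)"

definition clean_overlap_prefix :: "('a list \<times> 'a list) set \<Rightarrow> 'a list \<Rightarrow> 'a list \<Rightarrow> bool" where
  "clean_overlap_prefix R u v \<longleftrightarrow>
     (\<exists>b rs ys. overlap_factorisation R u v b rs ys \<and>
        clean R u (b @ concat (map (\<lambda>(r, y). max_piece_prefix R r @ y) (zip (butlast rs) ys)))
          (max_piece_prefix R (last rs)) (middle_word R (last rs)))"

definition rho :: "('a list \<times> 'a list) set \<Rightarrow> 'a list \<Rightarrow> int" where
  "rho R w = (if \<exists>v. clean_overlap_prefix R w v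
              then int (length w) - int (length (SOME v. clean_overlap_prefix R w v))
              else -1)"

end

theory Submission
  imports Defs
begin

lemma piece_factor:
  assumes "piece R (u @ q @ t)" shows "piece R q"
proof (cases "q = []")
  case True then show ?thesis by (simp add: piece_def)
next
  case False
  then have ne: "u @ q @ t \<noteq> []" by simp
  from assms ne obtain r1 i1 r2 i2 where h: "r1 \<in> relation_words R" "r2 \<in> relation_words R"
    "occurs_at (u @ q @ t) r1 i1" "occurs_at (u @ q @ t) r2 i2" "(r1, i1) \<noteq> (r2, i2)"
    unfolding piece_def by blast
  from h(3) obtain s1 t1 where s1: "r1 = s1 @ (u @ q @ t) @ t1" "length s1 = i1"
    unfolding occurs_at_def by blast
  from h(4) obtain s2 t2 where s2: "r2 = s2 @ (u @ q @ t) @ t2" "length s2 = i2"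
    unfolding occurs_at_def by blast
  have o1: "occurs_at q r1 (i1 + length u)" unfolding occurs_at_def
    by (rule exI[of _ "s1 @ u"], rule exI[of _ "t @ t1"]) (simp add: s1)
  have o2: "occurs_at q r2 (i2 + length u)" unfolding occurs_at_def
    by (rule exI[of _ "s2 @ u"], rule exI[of _ "t @ t2"]) (simp add: s2)
  have "(r1, i1 + length u) \<noteq> (r2, i2 + length u)" using h(5) by auto
  then show ?thesis using h(1,2) o1 o2 unfolding piece_def by blast
qed

lemma piece_occ:
  "r1 \<in> relation_words R \<Longrightarrow> r2 \<in> relation_words R \<Longrightarrow> occurs_at p r1 i1 \<Longrightarrow>
   occurs_at p r2 i2 \<Longrightarrow> (r1, i1) \<noteq> (r2, i2) \<Longrightarrow> piece R p"
  unfolding piece_def by blast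

lemma occ0: "occurs_at p (p @ t) 0"
  unfolding occurs_at_def by (rule exI[of _ "[]"]) auto

lemma occ_at: "occurs_at p (s @ p @ t) (length s)"
  unfolding occurs_at_def by blast

lemma mpp_props:
  shows "length (max_piece_prefix R r) = (GREATEST k. k \<le> length r \<and> piece R (take k r))"
    and "length (max_piece_prefix R r) \<le> length r"
    and "piece R (max_piece_prefix R r)"
proof -
  let ?P = "\<lambda>k. k \<le> length r \<and> piece R (take k r)"
  have "?P 0" by (simp add: piece_def)
  then have g: "?P (Greatest ?P)" by (rule GreatestI_nat[where b="length r"]) auto
  show "length (max_piece_prefix R r) = (GREATEST k. k \<le> length r \<and> piece R (take k r))"
    "length (max_piece_prefix R r) \<le> length r" "piece R (max_piece_prefix R r)"
    using g unfolding max_piece_prefix_def by auto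
qed

lemma mpp_max:
  assumes "k \<le> length r" "piece R (take k r)"
  shows "k \<le> length (max_piece_prefix R r)"
  unfolding mpp_props(1) by (rule Greatest_le_nat[where b="length r"]) (use assms in auto)

lemma mps_props:
  shows "length (max_piece_suffix R r) = (GREATEST k. k \<le> length r \<and> piece R (drop (length r - k) r))"
    and "length (max_piece_suffix R r) \<le> length r"
    and "piece R (max_piece_suffix R r)"
proof -
  let ?P = "\<lambda>k. k \<le> length r \<and> piece R (drop (length r - k) r)"
  have "?P 0" by (simp add: piece_def)
  then have g: "?P (Greatest ?P)" by (rule GreatestI_nat[where b="length r"]) auto
  show "length (max_piece_suffix R r) = (GREATEST k. k \<le> length r \<and> piece R (drop (length r - k) r))"
    "length (max_piece_suffix R r) \<le> length r" "piece R (max_piece_suffix R r)"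
    using g unfolding max_piece_suffix_def by auto
qed

lemma mps_max:
  assumes "k \<le> length r" "piece R (drop (length r - k) r)"
  shows "k \<le> length (max_piece_suffix R r)"
  unfolding mps_props(1) by (rule Greatest_le_nat[where b="length r"]) (use assms in auto)

lemma mps_eq: "max_piece_suffix R r = drop (length r - length (max_piece_suffix R r)) r"
  by (subst mps_props(1)) (rule max_piece_suffix_def)

lemma mpp_eq: "max_piece_prefix R r = take (length (max_piece_prefix R r)) r"
  unfolding max_piece_prefix_def by (simp add: min_def)

lemma decomp:
  assumes c4: "small_overlap_C 4 R" and r: "r \<in> relation_words R"
  shows "r = max_piece_prefix R r @ middle_word R r @ max_piece_suffix R r
         \<and> middle_word R r \<noteq> []"
proof -
  define kx where "kx = length (max_piece_prefix R r)"
  define kz where "kz = length (max_piece_suffix R r)"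
  have X: "max_piece_prefix R r = take kx r" using mpp_eq kx_def by metis
  have Z: "max_piece_suffix R r = drop (length r - kz) r" using mps_eq kz_def by metis
  have Y: "middle_word R r = drop kx (take (length r - kz) r)"
    unfolding middle_word_def kx_def kz_def by simp
  have kxl: "kx \<le> length r" and kzl: "kz \<le> length r" using mpp_props mps_props kx_def kz_def by auto
  have lt: "kx < length r - kz"
  proof (rule ccontr)
    assume "\<not> kx < length r - kz"
    then have le: "length r - kz \<le> kx" by simp
    have "drop kx r = drop (kx - (length r - kz)) (drop (length r - kz) r)"
      using le by simp
    define Zs where "Zs = drop (length r - kz) r"
    define j where "j = kx - (length r - kz)"
    have dk: "drop kx r = drop j Zs" using le unfolding Zs_def j_def by simp
    have "take j Zs @ drop j Zs @ [] = Zs" by simp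
    then have "piece R (take j Zs @ drop j Zs @ [])"
      using mps_props(3)[of R r] Z unfolding Zs_def by metis
    then have pd: "piece R (drop kx r)" using dk piece_factor by metis
    have pt: "piece R (take kx r)" using mpp_props(3)[of R r] X by simp
    have "\<forall>q\<in>set [take kx r, drop kx r]. piece R q" using pd pt by simp
    moreover have "concat [take kx r, drop kx r] = r" by simp
    ultimately have "4 \<le> length [take kx r, drop kx r]"
      using c4 r unfolding small_overlap_C_def by blast
    then show False by simp
  qed
  have "take kx r = take kx (take (length r - kz) r)" using lt by simp
  then have e: "take kx r @ drop kx (take (length r - kz) r) = take (length r - kz) r"
    by (metis append_take_drop_id)
  have "r = (take kx r @ drop kx (take (length r - kz) r)) @ drop (length r - kz) r"
    unfolding e by simp
  then have "r = take kx r @ drop kx (take (length r - kz) r) @ drop (length r - kz) r"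
    by simp
  moreover have "drop kx (take (length r - kz) r) \<noteq> []" using lt by simp
  ultimately show ?thesis using X Y Z by simp
qed

lemma not_piece_long_prefix:
  assumes "prefix q r" "length (max_piece_prefix R r) < length q"
  shows "\<not> piece R q"
proof
  assume "piece R q"
  moreover have "q = take (length q) r" using assms(1) by (metis append_eq_conv_conj prefix_def)
  moreover have "length q \<le> length r" using assms(1) prefix_length_le by blast
  ultimately have "length q \<le> length (max_piece_prefix R r)" using mpp_max by metis
  then show False using assms(2) by simp
qed

lemma not_piece_rel:
  assumes c4: "small_overlap_C 4 R" and r: "r \<in> relation_words R"
  shows "\<not> piece R r"
proof
  assume "piece R r"
  then have "\<forall>q\<in>set [r]. piece R q" by simp
  moreover have "concat [r] = r" by simp
  ultimately have "4 \<le> length [r]" using c4 r unfolding small_overlap_C_def by blast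
  then show False by simp
qed

lemma block_prefix:
  assumes c4: "small_overlap_C 4 R" and r: "r \<in> relation_words R"
    and y: "y \<noteq> []" "prefix y (middle_word R r)"
  shows "prefix (max_piece_prefix R r @ y) r"
    "\<not> piece R (max_piece_prefix R r @ y)"
proof -
  from y(2) obtain t where "middle_word R r = y @ t" by (auto simp: prefix_def)
  then have "r = (max_piece_prefix R r @ y) @ t @ max_piece_suffix R r"
    using decomp[OF c4 r] by simp
  then show p: "prefix (max_piece_prefix R r @ y) r" by (metis prefixI)
  show "\<not> piece R (max_piece_prefix R r @ y)"
    by (rule not_piece_long_prefix[OF p]) (use y in simp)
qed

lemma blocks:
  assumes "overlap_factorisation R u v b rs ys"
    and mw: "\<forall>r\<in>relation_words R. middle_word R r \<noteq> []"
  shows "\<exists>r1 y1 rest. r1 \<in> relation_words R \<and> y1 \<noteq> [] \<and> prefix y1 (middle_word R r1) \<and>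
     v = b @ max_piece_prefix R r1 @ y1 @ rest \<and>
     ((rest = [] \<and> y1 = middle_word R r1) \<or>
      (strict_prefix y1 (middle_word R r1) \<and>
       (\<exists>r2 y2 rest2. r2 \<in> relation_words R \<and> y2 \<noteq> [] \<and> prefix y2 (middle_word R r2) \<and>
          rest = max_piece_prefix R r2 @ y2 @ rest2)))"
proof -
  note of = assms(1)[unfolded overlap_factorisation_def]
  from of have rs: "rs \<noteq> []" "set rs \<subseteq> relation_words R" "length ys = length rs - 1" by auto
  have ysc: "\<forall>i<length ys. ys ! i \<noteq> [] \<and> strict_prefix (ys ! i) (middle_word R (rs ! i))"
    using of by blast
  have v: "v = b @ concat (map (\<lambda>(r, y). max_piece_prefix R r @ y) (zip (butlast rs) ys))
           @ max_piece_prefix R (last rs) @ middle_word R (last rs)" using of by blast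
  obtain r1 rs' where rs1: "rs = r1 # rs'" using rs(1) by (cases rs) auto
  show ?thesis
  proof (cases rs')
    case Nil
    then have "ys = []" using rs(3) rs1 by simp
    then show ?thesis using v rs1 Nil rs(2) mw
      by (intro exI[of _ r1] exI[of _ "middle_word R r1"] exI[of _ "[]"]) auto
  next
    case (Cons r2 rs'')
    obtain y1 ys' where ys1: "ys = y1 # ys'" using rs(3) rs1 Cons by (cases ys) auto
    have y1: "y1 \<noteq> []" "strict_prefix y1 (middle_word R r1)" using ysc ys1 rs1 by force+
    have r12: "r1 \<in> relation_words R" "r2 \<in> relation_words R" using rs(2) rs1 Cons by auto
    show ?thesis
    proof (cases rs'')
      case Nil
      then have "ys' = []" using rs(3) rs1 Cons ys1 by simp
      then have "v = b @ max_piece_prefix R r1 @ y1 @ (max_piece_prefix R r2 @ middle_word R r2 @ [])"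
        using v rs1 Cons Nil ys1 by simp
      moreover have "prefix y1 (middle_word R r1)" using y1 by (simp add: strict_prefix_def)
      moreover have "middle_word R r2 \<noteq> []" using mw r12 by blast
      ultimately show ?thesis using y1 r12 by blast
    next
      case (Cons r3 rs3)
      obtain y2 ys'' where ys2: "ys' = y2 # ys''" using rs(3) rs1 \<open>rs' = r2 # rs''\<close> Cons ys1
        by (cases ys') auto
      have y2: "y2 \<noteq> []" "strict_prefix y2 (middle_word R r2)"
        using ysc[rule_format, of 1] ys1 ys2 rs1 \<open>rs' = r2 # rs''\<close> by auto
      define rest2 where "rest2 = concat (map (\<lambda>(r, y). max_piece_prefix R r @ y) (zip (butlast rs'') ys''))
           @ max_piece_prefix R (last rs) @ middle_word R (last rs)"
      have "butlast rs = r1 # r2 # butlast rs''" using rs1 \<open>rs' = r2 # rs''\<close> Cons by simp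
      then have "v = b @ max_piece_prefix R r1 @ y1 @ (max_piece_prefix R r2 @ y2 @ rest2)"
        using v ys1 ys2 unfolding rest2_def by simp
      moreover have "prefix y1 (middle_word R r1)" using y1 by (simp add: strict_prefix_def)
      moreover have "prefix y2 (middle_word R r2)" using y2 by (simp add: strict_prefix_def)
      ultimately show ?thesis using y1 y2 r12 by blast
    qed
  qed
qed

lemma partA:
  assumes c4: "small_overlap_C 4 R" and p: "piece R p"
    and v: "clean_overlap_prefix R (p @ w') v"
  shows "length p < length v"
proof (rule ccontr)
  assume "\<not> length p < length v"
  then have le: "length v \<le> length p" by simp
  from v obtain b rs ys where of: "overlap_factorisation R (p @ w') v b rs ys"
    unfolding clean_overlap_prefix_def by blast
  then have pre: "prefix v (p @ w')" and rs: "rs \<noteq> []" "set rs \<subseteq> relation_words R"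
    unfolding overlap_factorisation_def by auto
  define A where "A = b @ concat (map (\<lambda>(r, y). max_piece_prefix R r @ y) (zip (butlast rs) ys))"
  have vA: "v = A @ (max_piece_prefix R (last rs) @ middle_word R (last rs))"
    using of unfolding overlap_factorisation_def A_def by simp
  have lr: "last rs \<in> relation_words R" using rs by auto
  have "prefix p (p @ w')" by simp
  then have "prefix v p" using prefix_length_prefix[OF pre _ le] by blast
  then obtain t where "p = A @ (max_piece_prefix R (last rs) @ middle_word R (last rs)) @ t"
    using vA by (auto simp: prefix_def)
  then have "piece R (max_piece_prefix R (last rs) @ middle_word R (last rs))"
    using p piece_factor by metis
  moreover have "\<not> piece R (max_piece_prefix R (last rs) @ middle_word R (last rs))"
    using block_prefix(2)[OF c4 lr] decomp[OF c4 lr] by simp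
  ultimately show False by simp
qed

lemma partB:
  assumes c4: "small_overlap_C 4 R" and r: "r \<in> relation_words R"
    and cop: "clean_overlap_prefix R (r @ w') (max_piece_prefix R r @ middle_word R r)"
    and v: "clean_overlap_prefix R (r @ w') v"
  shows "length v \<le> length r"
proof (rule ccontr)
  assume "\<not> length v \<le> length r"
  then have gt: "length r < length v" by simp
  have mw: "\<forall>r\<in>relation_words R. middle_word R r \<noteq> []" using decomp[OF c4] by blast
  from v obtain b rs ys where of: "overlap_factorisation R (r @ w') v b rs ys"
    unfolding clean_overlap_prefix_def by blast
  have pre: "prefix v (r @ w')" using of unfolding overlap_factorisation_def by auto
  have noX: "\<not> (\<exists>r0 s t. r0 \<in> relation_words R \<and>
           v = s @ (max_piece_prefix R r0 @ middle_word R r0) @ t \<and> length s < length b)"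
    using of unfolding overlap_factorisation_def by blast
  have dr: "r = max_piece_prefix R r @ middle_word R r @ max_piece_suffix R r" using decomp[OF c4 r] by blast
  have "prefix (max_piece_prefix R r @ middle_word R r) (r @ w')"
    by (subst (2) dr) simp
  moreover have "length r = length (max_piece_prefix R r @ middle_word R r @ max_piece_suffix R r)"
    using dr by (rule arg_cong)
  then have "length (max_piece_prefix R r @ middle_word R r) \<le> length v"
    using gt by simp
  ultimately have "prefix (max_piece_prefix R r @ middle_word R r) v"
    using pre prefix_length_prefix by blast
  then obtain t where "v = [] @ (max_piece_prefix R r @ middle_word R r) @ t"
    by (auto simp: prefix_def)
  then have b: "b = []" using noX r by fastforce
  from blocks[OF of mw] obtain r1 y1 rest where bl: "r1 \<in> relation_words R" "y1 \<noteq> []"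
    "prefix y1 (middle_word R r1)" "v = b @ max_piece_prefix R r1 @ y1 @ rest"
    "(rest = [] \<and> y1 = middle_word R r1) \<or>
      (strict_prefix y1 (middle_word R r1) \<and>
       (\<exists>r2 y2 rest2. r2 \<in> relation_words R \<and> y2 \<noteq> [] \<and> prefix y2 (middle_word R r2) \<and>
          rest = max_piece_prefix R r2 @ y2 @ rest2))" by blast
  note bl(4)[unfolded b append_Nil]
  note bl = bl(1-3) this bl(5)
  have B1: "prefix (max_piece_prefix R r1 @ y1) r1" "\<not> piece R (max_piece_prefix R r1 @ y1)"
    using block_prefix[OF c4 bl(1) bl(2,3)] by auto
  have B1w: "prefix (max_piece_prefix R r1 @ y1) (r @ w')"
  proof -
    have "prefix (max_piece_prefix R r1 @ y1) v" using bl(4) by simp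
    then show ?thesis using pre by (rule prefix_order.trans)
  qed
  have rw: "prefix r (r @ w')" by simp
  have r1r: "r1 = r"
  proof (rule ccontr)
    assume ne: "r1 \<noteq> r"
    show False
    proof (cases "length (max_piece_prefix R r1 @ y1) \<le> length r")
      case True
      then have "prefix (max_piece_prefix R r1 @ y1) r" using B1w rw prefix_length_prefix by blast
      then obtain t1 t2 where "r = (max_piece_prefix R r1 @ y1) @ t1" "r1 = (max_piece_prefix R r1 @ y1) @ t2"
        using B1(1) by (auto simp: prefix_def)
      then have "occurs_at (max_piece_prefix R r1 @ y1) r 0" "occurs_at (max_piece_prefix R r1 @ y1) r1 0"
        using occ0 by metis+
      then have "piece R (max_piece_prefix R r1 @ y1)"
        using piece_occ[OF r bl(1)] ne by blast
      then show False using B1(2) by simp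
    next
      case False
      then have "prefix r (max_piece_prefix R r1 @ y1)" using prefix_length_prefix[OF rw B1w] by simp
      then have "prefix r r1" using B1(1) by (rule prefix_order.trans)
      then obtain t2 where "r1 = r @ t2" by (auto simp: prefix_def)
      then have "occurs_at r r1 0" using occ0 by metis
      moreover have "occurs_at r r 0" using occ0[of r "[]"] by simp
      ultimately have "piece R r" using piece_occ[OF r bl(1)] ne by blast
      then show False using not_piece_rel[OF c4 r] by simp
    qed
  qed
  show False
  proof (cases "rest = [] \<and> y1 = middle_word R r1")
    case True
    have lr: "length r = length (max_piece_prefix R r @ middle_word R r @ max_piece_suffix R r)"
      using dr by (rule arg_cong)
    have "length v \<le> length r" using bl(4) r1r True unfolding lr by simp
    then show False using gt by simp
  next
    case False
    then obtain r2 y2 rest2 where sp: "strict_prefix y1 (middle_word R r)"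
      and r2: "r2 \<in> relation_words R" "y2 \<noteq> []" "prefix y2 (middle_word R r2)"
      and rest: "rest = max_piece_prefix R r2 @ y2 @ rest2" using bl(5) r1r by blast
    obtain sY where sY: "middle_word R r = y1 @ sY" "sY \<noteq> []" using sp
      by (auto simp: strict_prefix_def prefix_def)
    define B2 where "B2 = max_piece_prefix R r2 @ y2"
    define D where "D = sY @ max_piece_suffix R r"
    define q where "q = max_piece_prefix R r @ y1"
    have rq: "r = q @ D" using dr sY unfolding q_def D_def by simp
    have B2: "prefix B2 r2" "\<not> piece R B2" using block_prefix[OF c4 r2] B2_def by auto
    from pre obtain m where "r @ w' = v @ m" by (auto simp: prefix_def)
    moreover have "v = q @ B2 @ rest2" using bl(4) r1r rest unfolding q_def B2_def by simp
    moreover have "r @ w' = q @ D @ w'" using rq by (metis append.assoc)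
    ultimately have "q @ D @ w' = q @ B2 @ rest2 @ m" by simp
    then have eq: "D @ w' = B2 @ (rest2 @ m)" by simp
    have qpos: "length q \<noteq> 0" using bl(2) q_def by simp
    have pB: "prefix B2 (D @ w')" unfolding eq by simp
    have pDw: "prefix D (D @ w')" by simp
    have lrq: "length r = length q + length D" using rq by (metis length_append)
    show False
    proof (cases "length B2 \<le> length D")
      case True
      then obtain t where "D = B2 @ t" using prefix_length_prefix[OF pB pDw] by (auto simp: prefix_def)
      then have "r = q @ B2 @ t" using rq by simp
      then have "occurs_at B2 r (length q)" using occ_at[of B2 q t] by simp
      moreover obtain t2 where "r2 = B2 @ t2" using B2(1) by (auto simp: prefix_def)
      moreover have "occurs_at B2 r2 0" using \<open>r2 = B2 @ t2\<close> occ0[of B2 t2] by simp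
      ultimately have "piece R B2" using piece_occ[OF r r2(1)] qpos by auto
      then show False using B2(2) by simp
    next
      case False
      then obtain t where "B2 = D @ t" using prefix_length_prefix[OF pDw pB] by (auto simp: prefix_def)
      then obtain t2 where "r2 = D @ t2" using B2(1) by (auto simp: prefix_def)
      moreover have "occurs_at D r (length q)" using rq occ_at[of D q "[]"] by simp
      moreover have "occurs_at D r2 0" using \<open>r2 = D @ t2\<close> occ0[of D t2] by simp
      ultimately have pD: "piece R D" using piece_occ[OF r r2(1)] qpos by auto
      have "drop (length r - length D) r = D" using lrq rq by (metis add_diff_cancel_right' append_eq_conv_conj)
      then have "piece R (drop (length r - length D) r)" using pD by simp
      then have "length D \<le> length (max_piece_suffix R r)"
        using mps_max[of "length D" r R] lrq by simp
      then show False using sY(2) D_def by simp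
    qed
  qed
qed

theorem lemma2:
  fixes R :: "('a list \<times> 'a list) set" and w w' r p :: "'a list"
  assumes "small_overlap_C 4 R"
    and "r \<in> relation_words R"
    and "w = r @ w'"
    and "clean_overlap_prefix R w (max_piece_prefix R r @ middle_word R r)"
    and "piece R p"
  shows "rho R (p @ w') < rho R w"
proof -
  have ex: "\<exists>v. clean_overlap_prefix R w v" using assms(4) by blast
  then have "clean_overlap_prefix R w (SOME v. clean_overlap_prefix R w v)" by (rule someI_ex)
  then have "length (SOME v. clean_overlap_prefix R w v) \<le> length r"
    using partB[OF assms(1,2)] assms(3,4) by blast
  then have rw: "rho R w \<ge> int (length w')" unfolding rho_def using ex assms(3) by simp
  have "rho R (p @ w') < int (length w')"
  proof (cases "\<exists>v. clean_overlap_prefix R (p @ w') v")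
    case True
    then have "clean_overlap_prefix R (p @ w') (SOME v. clean_overlap_prefix R (p @ w') v)"
      by (rule someI_ex)
    then have "length p < length (SOME v. clean_overlap_prefix R (p @ w') v)"
      using partA[OF assms(1,5)] by blast
    then show ?thesis unfolding rho_def using True by simp
  next
    case False
    then have "rho R (p @ w') = -1" unfolding rho_def if_not_P[OF False] by simp
    then show ?thesis by simp
  qed
  then show ?thesis using rw by simp
qed

end
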